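(* Let $k\ge1$ and $X,Y\in\mathrm{Mat}_k(\mathbb{Z}_{\geq 1})$. Then $\mathrm{size}_2(X)+\mathrm{size}_2(Y)\le\mathrm{size}_2(X\otimes Y)+2k^2-1$, where $\otimes$ is max-times matrix multiplication.
   Context: Max-times product: $(X\otimes Y)_{ij}=\max_{1\le l\le k}(x_{il}\cdot y_{lj})$. For an integer $a\ge1$, $\mathrm{size}_2(a)=\lfloor\log_2 a\rfloor+1$. For a $k\times k$ matrix $A$, $\mathrm{size}_2(A)=\sum_{i=1}^k\sum_{j=1}^k\mathrm{size}_2(a_{ij})+k^2-1$. *)

theory Defs
  imports Complex_Main
begin

definition size2 :: "nat \<Rightarrow> nat" where
  "size2 a = nat \<lfloor>log 2 (real a)\<rfloor> + 1"

text \<open>k x k matrices are represented as functions nat => nat => nat,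
  only entries with indices in {0..<k} are relevant.\<close>
definition size2_mat :: "nat \<Rightarrow> (nat \<Rightarrow> nat \<Rightarrow> nat) \<Rightarrow> nat" where
  "size2_mat k A = (\<Sum>i<k. \<Sum>j<k. size2 (A i j)) + k^2 - 1"

definition maxtimes :: "nat \<Rightarrow> (nat \<Rightarrow> nat \<Rightarrow> nat) \<Rightarrow> (nat \<Rightarrow> nat \<Rightarrow> nat) \<Rightarrow> (nat \<Rightarrow> nat \<Rightarrow> nat)" where
  "maxtimes k X Y = (\<lambda>i j. Max ((\<lambda>l. X i l * Y l j) ` {..<k}))"

end

theory Submission
  imports Defs
begin

lemma size2_pow: assumes "a \<ge> 1" shows "2 ^ (size2 a - 1) \<le> a"
proof -
  let ?L = "\<lfloor>log 2 (real a)\<rfloor>"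
  have L0: "?L \<ge> 0" using assms by simp
  have "real_of_int ?L \<le> log 2 (real a)" by linarith
  hence "2 powr real_of_int ?L \<le> 2 powr log 2 (real a)" by simp
  also have "\<dots> = real a" using assms by simp
  finally have "2 powr real (nat ?L) \<le> real a" using L0 by simp
  hence "real (2 ^ nat ?L) \<le> real a" by (simp add: powr_realpow)
  hence "2 ^ nat ?L \<le> a" by linarith
  thus ?thesis by (simp add: size2_def)
qed

lemma size2_ge: assumes "2 ^ n \<le> c" shows "n + 1 \<le> size2 c"
proof -
  have c: "c \<ge> 1" using assms by (metis le_trans one_le_numeral one_le_power)
  have "log 2 (real (2^n)) \<le> log 2 (real c)"
    using assms c by (subst log_le_cancel_iff) (auto simp del: of_nat_power)
  hence "real n \<le> log 2 (real c)" by (simp add: log_nat_power)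
  hence "int n \<le> \<lfloor>log 2 (real c)\<rfloor>" by (simp add: le_floor_iff)
  thus ?thesis by (simp add: size2_def)
qed

lemma size2_pos: "size2 a \<ge> 1" by (simp add: size2_def)

lemma size2_mono: assumes "a \<ge> 1" "a \<le> c" shows "size2 a \<le> size2 c"
proof -
  have "2 ^ (size2 a - 1) \<le> c" using size2_pow[OF assms(1)] assms(2) by linarith
  from size2_ge[OF this] show ?thesis using size2_pos[of a] by linarith
qed

lemma size2_mult: assumes "a \<ge> 1" "b \<ge> 1" shows "size2 a + size2 b \<le> size2 (a*b) + 1"
proof -
  have "2 ^ (size2 a - 1) * 2 ^ (size2 b - 1) \<le> a * b"
    using size2_pow[OF assms(1)] size2_pow[OF assms(2)] by (rule mult_le_mono)
  hence "2 ^ (size2 a - 1 + (size2 b - 1)) \<le> a * b" by (simp add: power_add)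
  from size2_ge[OF this] show ?thesis using size2_pos[of a] size2_pos[of b] by linarith
qed

lemma modinj: "(x::nat) < k \<Longrightarrow> y < k \<Longrightarrow> (i + x) mod k = (i + y) mod k \<Longrightarrow> x = y"
proof (induction x y rule: linorder_wlog)
  case (le a b)
  hence "k dvd (i + b) - (i + a)" by (metis add_le_mono1 add.commute mod_eq_dvd_iff_nat)
  hence "k dvd b - a" by simp
  moreover have "b - a < k" using le by linarith
  ultimately have "b - a = 0" by (metis dvd_imp_le not_less neq0_conv)
  thus ?case using le by linarith
next
  case (sym a b) thus ?case by metis
qed

lemma bij_shift: fixes i k :: nat assumes "i < k" shows "bij_betw (\<lambda>j. (i + j) mod k) {..<k} {..<k}"
proof (rule bij_betw_imageI)
  show "inj_on (\<lambda>j. (i + j) mod k) {..<k}"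
  proof (rule inj_onI)
    fix x y :: nat assume "x \<in> {..<k}" "y \<in> {..<k}" "(i + x) mod k = (i + y) mod k"
    thus "x = y" using modinj[of x k y i] by simp
  qed
  hence "card ((\<lambda>j. (i + j) mod k) ` {..<k}) = k" by (simp add: card_image)
  moreover have "(\<lambda>j. (i + j) mod k) ` {..<k} \<subseteq> {..<k}" using assms by auto
  ultimately show "(\<lambda>j. (i + j) mod k) ` {..<k} = {..<k}"
    by (metis card_lessThan card_subset_eq finite_lessThan)
qed

theorem mainTheorem14:
  fixes k :: nat and X Y :: "nat \<Rightarrow> nat \<Rightarrow> nat"
  assumes "k \<ge> 1"
    and "\<And>i j. i < k \<Longrightarrow> j < k \<Longrightarrow> X i j \<ge> 1"
    and "\<And>i j. i < k \<Longrightarrow> j < k \<Longrightarrow> Y i j \<ge> 1"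
  shows "size2_mat k X + size2_mat k Y \<le> size2_mat k (maxtimes k X Y) + 2 * k^2 - 1"
proof -
  define Z where "Z = maxtimes k X Y"
  define l where "l = (\<lambda>i j. (i + j) mod k)"
  have lk: "l i j < k" for i j using assms(1) by (simp add: l_def)
  have pt: "size2 (X i (l i j)) + size2 (Y (l i j) j) \<le> size2 (Z i j) + 1"
    if "i < k" "j < k" for i j
  proof -
    have x: "X i (l i j) \<ge> 1" and y: "Y (l i j) j \<ge> 1" using assms that lk by auto
    have "X i (l i j) * Y (l i j) j \<le> Z i j" unfolding Z_def maxtimes_def
      using lk by (intro Max_ge) auto
    with size2_mult[OF x y] size2_mono[of "X i (l i j) * Y (l i j) j" "Z i j"] x y
    show ?thesis by (simp add: le_trans)
  qed
  have SX: "(\<Sum>i<k. \<Sum>j<k. size2 (X i (l i j))) = (\<Sum>i<k. \<Sum>j<k. size2 (X i j))"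
  proof (rule sum.cong[OF refl])
    fix i assume "i \<in> {..<k}"
    then show "(\<Sum>j<k. size2 (X i (l i j))) = (\<Sum>j<k. size2 (X i j))"
      using sum.reindex_bij_betw[OF bij_shift[of i k], of "\<lambda>j. size2 (X i j)"]
      by (simp add: l_def)
  qed
  have SY: "(\<Sum>i<k. \<Sum>j<k. size2 (Y (l i j) j)) = (\<Sum>i<k. \<Sum>j<k. size2 (Y i j))"
  proof -
    have "(\<Sum>i<k. \<Sum>j<k. size2 (Y (l i j) j)) = (\<Sum>j<k. \<Sum>i<k. size2 (Y (l i j) j))"
      by (rule sum.swap)
    also have "\<dots> = (\<Sum>j<k. \<Sum>i<k. size2 (Y i j))"
    proof (rule sum.cong[OF refl])
      fix j assume "j \<in> {..<k}"
      then show "(\<Sum>i<k. size2 (Y (l i j) j)) = (\<Sum>i<k. size2 (Y i j))"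
        using sum.reindex_bij_betw[OF bij_shift[of j k], of "\<lambda>i. size2 (Y i j)"]
        by (simp add: l_def add.commute)
    qed
    also have "\<dots> = (\<Sum>i<k. \<Sum>j<k. size2 (Y i j))" by (rule sum.swap)
    finally show ?thesis .
  qed
  have "(\<Sum>i<k. \<Sum>j<k. size2 (X i (l i j)) + size2 (Y (l i j) j))
        \<le> (\<Sum>i<k. \<Sum>j<k. size2 (Z i j) + 1)"
    using pt by (intro sum_mono) auto
  moreover have zq: "(\<Sum>i<k. \<Sum>j<k. size2 (Z i j) + 1) = (\<Sum>i<k. \<Sum>j<k. size2 (Z i j)) + k^2"
    by (simp only: sum.distrib) (simp add: power2_eq_square)
  ultimately have ineq: "(\<Sum>i<k. \<Sum>j<k. size2 (X i (l i j)) + size2 (Y (l i j) j)) \<le> (\<Sum>i<k. \<Sum>j<k. size2 (Z i j)) + k^2" by linarith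
  have main: "(\<Sum>i<k. \<Sum>j<k. size2 (X i j)) + (\<Sum>i<k. \<Sum>j<k. size2 (Y i j))
        \<le> (\<Sum>i<k. \<Sum>j<k. size2 (Z i j)) + k^2"
  proof -
    have "(\<Sum>i<k. \<Sum>j<k. size2 (X i (l i j)) + size2 (Y (l i j) j)) =
      (\<Sum>i<k. \<Sum>j<k. size2 (X i (l i j))) + (\<Sum>i<k. \<Sum>j<k. size2 (Y (l i j) j))"
      by (simp add: sum.distrib)
    thus ?thesis using SX SY ineq by linarith
  qed
  have k2: "k^2 \<ge> 1" using assms(1) by simp
  show ?thesis using main k2 unfolding size2_mat_def Z_def[symmetric] by linarith
qed

end
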